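(* Let $\psi':V'\otimes V\to V\otimes V^*$ and $\psi:V^*\otimes V\to V\otimes V^*$ be the $R$-linear maps defined by \[ \psi'(v_i'\otimes v_k)=\begin{cases}q^{n+1-2i}\,v_k\otimes v_i^* & k\ne i,\\ q^{n+1-2i}\Bigl(q^{-1}v_i\otimes v_i^*+(q^{-1}-q)\sum_{l=1}^{i-1}v_l\otimes v_l^*\Bigr) & k=i,\end{cases} \] \[ \psi(v_i^*\otimes v_k)=\begin{cases}v_k\otimes v_i^* & k\ne i,\\ q^{-1}v_i\otimes v_i^*+(q^{-1}-q)\sum_{l=1}^{i-1}v_l\otimes v_l^* & k=i.\end{cases} \] Then $\psi'$ and $\psi$ are isomorphisms of $\mathbf U$-modules (in particular bijective for every $R$ and every invertible $q$).
   Context: $R$ is a commutative ring with $1$, $q\in R$ invertible, $n\ge1$. $\mathbf U$ denotes $\mathbf U_R=R\otimes_{\mathbb{Z}[q,q^{-1}]}\mathbf U$, where $\mathbf U$ is the $\mathbb{Z}[q,q^{-1}]$-subalgebra of $U_q(\mathfrak{gl}_n)$ (generators $e_i,f_i$ ($1\le i<n$), $q^h$ ($h\in\bigoplus_j\mathbb{Z}h_j$), standard relations, $K_i=q^{h_i-h_{i+1}}$) generated by the $q^h$ and divided powers $e_i^{(l)}=e_i^l/[l]_q!$, $f_i^{(l)}=f_i^l/[l]_q!$, $[l]_q=\sum_{j=0}^{l-1}q^{2j-l+1}$; Hopf structure $\Delta(q^h)=q^h\otimes q^h$, $\Delta(e_i)=e_i\otimes K_i^{-1}+1\otimes e_i$,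 $\Delta(f_i)=f_i\otimes1+K_i\otimes f_i$, $S(q^h)=q^{-h}$, $S(e_i)=-e_iK_i$, $S(f_i)=-K_i^{-1}f_i$. $V=R^n$ with basis $v_1,\dots,v_n$ is the vector representation: $q^hv_j=q^{\varepsilon_j(h)}v_j$ ($\varepsilon_j(h_k)=\delta_{jk}$), $e_iv_{i+1}=v_i$, $f_iv_i=v_{i+1}$, other $e_iv_j,f_iv_j$ zero. $V^*=\mathrm{Hom}_R(V,R)$ with dual basis $v_i^*$ and action $(xg)(v)=g(S(x)v)$; $V'$ is the same $R$-module with action $(xg)(v)=g(S^{-1}(x)v)$, its basis elements written $v_i'$. Tensor products are modules via $\Delta$. *)

theory Defs
  imports Main
begin

text \<open>Integer powers of the invertible element q, given together with its inverse qi.\<close>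
definition qp :: "'a::comm_ring_1 \<Rightarrow> 'a \<Rightarrow> int \<Rightarrow> 'a" where
  "qp q qi k = (if 0 \<le> k then q ^ nat k else qi ^ nat (- k))"

text \<open>Algebra generators of U_R: q^h (h given by its coordinates h_j, j = 1..n),
  divided powers e_i^(l) and f_i^(l).\<close>
datatype gen = Kh "nat \<Rightarrow> int" | E nat nat | F nat nat

definition valid_gen :: "nat \<Rightarrow> gen \<Rightarrow> bool" where
  "valid_gen n g = (case g of Kh h \<Rightarrow> True | E i l \<Rightarrow> 1 \<le> i \<and> i < n | F i l \<Rightarrow> 1 \<le> i \<and> i < n)"

definition Kpow :: "nat \<Rightarrow> int \<Rightarrow> gen" where
  "Kpow i m = Kh (\<lambda>j. m * ((if j = i then 1 else 0) - (if j = Suc i then 1 else 0)))"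

text \<open>Matrices over a basis index set; entry (b', b) = coefficient of basis vector b'
  in the image of basis vector b.\<close>
definition mmul :: "'b set \<Rightarrow> ('b \<Rightarrow> 'b \<Rightarrow> 'a::comm_ring_1) \<Rightarrow> ('b \<Rightarrow> 'b \<Rightarrow> 'a) \<Rightarrow> 'b \<Rightarrow> 'b \<Rightarrow> 'a" where
  "mmul B A C = (\<lambda>x z. \<Sum>y\<in>B. A x y * C y z)"

definition smul :: "'a::comm_ring_1 \<Rightarrow> ('b \<Rightarrow> 'b \<Rightarrow> 'a) \<Rightarrow> 'b \<Rightarrow> 'b \<Rightarrow> 'a" where
  "smul c A = (\<lambda>x y. c * A x y)"

definition transp :: "('b \<Rightarrow> 'b \<Rightarrow> 'a) \<Rightarrow> 'b \<Rightarrow> 'b \<Rightarrow> 'a" where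
  "transp A = (\<lambda>x y. A y x)"

definition kron :: "('b \<Rightarrow> 'b \<Rightarrow> 'a::comm_ring_1) \<Rightarrow> ('c \<Rightarrow> 'c \<Rightarrow> 'a) \<Rightarrow> 'b \<times> 'c \<Rightarrow> 'b \<times> 'c \<Rightarrow> 'a" where
  "kron A C = (\<lambda>(a', b') (a, b). A a' a * C b' b)"

text \<open>The vector representation V = R^n, basis v_1..v_n (indices 1..n).\<close>
definition vec_rep :: "'a::comm_ring_1 \<Rightarrow> 'a \<Rightarrow> gen \<Rightarrow> nat \<Rightarrow> nat \<Rightarrow> 'a" where
  "vec_rep q qi g = (case g of
      Kh h \<Rightarrow> (\<lambda>j k. if j = k then qp q qi (h j) else 0)
    | E i l \<Rightarrow> (if l = 0 then (\<lambda>j k. if j = k then 1 else 0)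
               else if l = 1 then (\<lambda>j k. if j = i \<and> k = Suc i then 1 else 0)
               else (\<lambda>j k. 0))
    | F i l \<Rightarrow> (if l = 0 then (\<lambda>j k. if j = k then 1 else 0)
               else if l = 1 then (\<lambda>j k. if j = Suc i \<and> k = i then 1 else 0)
               else (\<lambda>j k. 0)))"

text \<open>Dual module M^* with (x g)(v) = g(S(x) v): matrix of x is the transpose of the matrix
  of S(x).\<close>
definition dual_rep :: "'a::comm_ring_1 \<Rightarrow> 'a \<Rightarrow> 'b set \<Rightarrow> (gen \<Rightarrow> 'b \<Rightarrow> 'b \<Rightarrow> 'a) \<Rightarrow> gen \<Rightarrow> 'b \<Rightarrow> 'b \<Rightarrow> 'a" where
  "dual_rep q qi B \<rho> g = transp (case g of
      Kh h \<Rightarrow> \<rho> (Kh (\<lambda>j. - h j))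
    | E i l \<Rightarrow> smul ((-1) ^ l * qp q qi (int (l * (l - 1)))) (mmul B (\<rho> (E i l)) (\<rho> (Kpow i (int l))))
    | F i l \<Rightarrow> smul ((-1) ^ l * qp q qi (- int (l * (l - 1)))) (mmul B (\<rho> (Kpow i (- int l))) (\<rho> (F i l))))"

text \<open>The module M' with (x g)(v) = g(S^{-1}(x) v).  Here S^{-1}(q^h) = q^(-h),
  S^{-1}(e_i^(l)) = (-1)^l q^(-l(l-1)) K_i^l e_i^(l),
  S^{-1}(f_i^(l)) = (-1)^l q^(l(l-1)) f_i^(l) K_i^(-l).\<close>
definition dualp_rep :: "'a::comm_ring_1 \<Rightarrow> 'a \<Rightarrow> 'b set \<Rightarrow> (gen \<Rightarrow> 'b \<Rightarrow> 'b \<Rightarrow> 'a) \<Rightarrow> gen \<Rightarrow> 'b \<Rightarrow> 'b \<Rightarrow> 'a" where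
  "dualp_rep q qi B \<rho> g = transp (case g of
      Kh h \<Rightarrow> \<rho> (Kh (\<lambda>j. - h j))
    | E i l \<Rightarrow> smul ((-1) ^ l * qp q qi (- int (l * (l - 1)))) (mmul B (\<rho> (Kpow i (int l))) (\<rho> (E i l)))
    | F i l \<Rightarrow> smul ((-1) ^ l * qp q qi (int (l * (l - 1)))) (mmul B (\<rho> (F i l)) (\<rho> (Kpow i (- int l)))))"

text \<open>Tensor product via the coproduct:
  Delta(q^h) = q^h (x) q^h,
  Delta(e_i^(l)) = sum_k q^(-k(l-k)) e_i^(l-k) (x) e_i^(k) K_i^(-(l-k)),
  Delta(f_i^(l)) = sum_k q^(-k(l-k)) f_i^(k) K_i^(l-k) (x) f_i^(l-k)
  (these follow from Delta(e_i), Delta(f_i) by the q-binomial formula).\<close>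
definition tensor_rep :: "'a::comm_ring_1 \<Rightarrow> 'a \<Rightarrow> 'b set \<Rightarrow> 'c set \<Rightarrow> (gen \<Rightarrow> 'b \<Rightarrow> 'b \<Rightarrow> 'a)
    \<Rightarrow> (gen \<Rightarrow> 'c \<Rightarrow> 'c \<Rightarrow> 'a) \<Rightarrow> gen \<Rightarrow> 'b \<times> 'c \<Rightarrow> 'b \<times> 'c \<Rightarrow> 'a" where
  "tensor_rep q qi B1 B2 \<rho> \<sigma> g = (case g of
      Kh h \<Rightarrow> kron (\<rho> g) (\<sigma> g)
    | E i l \<Rightarrow> (\<lambda>x y. \<Sum>k\<in>{0..l}. qp q qi (- int (k * (l - k))) *
          kron (\<rho> (E i (l - k))) (mmul B2 (\<sigma> (E i k)) (\<sigma> (Kpow i (- int (l - k))))) x y)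
    | F i l \<Rightarrow> (\<lambda>x y. \<Sum>k\<in>{0..l}. qp q qi (- int (k * (l - k))) *
          kron (mmul B1 (\<rho> (F i k)) (\<rho> (Kpow i (int (l - k))))) (\<sigma> (F i (l - k))) x y))"

text \<open>Free R-module with basis B: coordinate functions vanishing outside B.\<close>
definition carrier :: "'b set \<Rightarrow> ('b \<Rightarrow> 'a::zero) set" where
  "carrier B = {x. \<forall>b. b \<notin> B \<longrightarrow> x b = 0}"

definition act :: "'b set \<Rightarrow> ('b \<Rightarrow> 'b \<Rightarrow> 'a::comm_ring_1) \<Rightarrow> ('b \<Rightarrow> 'a) \<Rightarrow> 'b \<Rightarrow> 'a" where
  "act B M x = (\<lambda>b'. if b' \<in> B then \<Sum>b\<in>B. M b' b * x b else 0)"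

definition lin_ext :: "'b set \<Rightarrow> ('b \<Rightarrow> 'c \<Rightarrow> 'a::comm_ring_1) \<Rightarrow> ('b \<Rightarrow> 'a) \<Rightarrow> 'c \<Rightarrow> 'a" where
  "lin_ext B img x = (\<lambda>c. \<Sum>b\<in>B. x b * img b c)"

definition is_U_iso :: "nat \<Rightarrow> 'b set \<Rightarrow> (gen \<Rightarrow> 'b \<Rightarrow> 'b \<Rightarrow> 'a::comm_ring_1) \<Rightarrow> 'c set
    \<Rightarrow> (gen \<Rightarrow> 'c \<Rightarrow> 'c \<Rightarrow> 'a) \<Rightarrow> (('b \<Rightarrow> 'a) \<Rightarrow> ('c \<Rightarrow> 'a)) \<Rightarrow> bool" where
  "is_U_iso n B1 \<rho>1 B2 \<rho>2 \<phi> =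
    ((\<forall>g x. valid_gen n g \<longrightarrow> x \<in> carrier B1 \<longrightarrow> \<phi> (act B1 (\<rho>1 g) x) = act B2 (\<rho>2 g) (\<phi> x))
     \<and> bij_betw \<phi> (carrier B1) (carrier B2))"

definition basis :: "nat \<Rightarrow> nat set" where
  "basis n = {1..n}"

text \<open>psi'(v_i' (x) v_k), as element of V (x) V^* with basis index (a, b) = v_a (x) v_b^*.\<close>
definition psi'_img :: "'a::comm_ring_1 \<Rightarrow> 'a \<Rightarrow> nat \<Rightarrow> nat \<times> nat \<Rightarrow> nat \<times> nat \<Rightarrow> 'a" where
  "psi'_img q qi n = (\<lambda>(i, k) (a, b). qp q qi (int n + 1 - 2 * int i) *
     (if k \<noteq> i then (if (a, b) = (k, i) then 1 else 0)
      else if (a, b) = (i, i) then qi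
      else if a = b \<and> 1 \<le> a \<and> a < i then qi - q else 0))"

definition psi_img :: "'a::comm_ring_1 \<Rightarrow> 'a \<Rightarrow> nat \<times> nat \<Rightarrow> nat \<times> nat \<Rightarrow> 'a" where
  "psi_img q qi = (\<lambda>(i, k) (a, b).
     (if k \<noteq> i then (if (a, b) = (k, i) then 1 else 0)
      else if (a, b) = (i, i) then qi
      else if a = b \<and> 1 \<le> a \<and> a < i then qi - q else 0))"

end

theory Submission
  imports Defs
begin


lemma qp_suc: assumes "q * qi = (1::'a::comm_ring_1)"
  shows "qp q qi (k + 1) = q * qp q qi k"
proof (cases "k \<ge> 0")
  case True
  then have "nat (k+1) = Suc (nat k)" by simp
  then show ?thesis using True by (simp add: qp_def)
next
  case False
  then have "k = -1 \<or> k < -1" by linarith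
  then show ?thesis
  proof
    assume "k = -1" then show ?thesis using assms by (simp add: qp_def)
  next
    assume k: "k < -1"
    then have "nat (-k) = Suc (nat (-(k+1)))" by simp
    then show ?thesis using k assms by (simp add: qp_def mult.assoc[symmetric])
  qed
qed

lemma qp_add: assumes "q * qi = (1::'a::comm_ring_1)"
  shows "qp q qi (a + b) = qp q qi a * qp q qi b"
proof (induction b rule: int_induct[where k=0])
  case base then show ?case by (simp add: qp_def)
next
  case (step1 i)
  have "qp q qi (a + (i+1)) = q * qp q qi (a+i)" using qp_suc[OF assms, of "a+i"] by (simp add: add.assoc)
  then show ?case using step1 qp_suc[OF assms, of i] by (simp add: mult.left_commute)
next
  case (step2 i)
  have e1: "qp q qi (a + i) = q * qp q qi (a+(i - 1))" using qp_suc[OF assms, of "a+(i - 1)"] by simp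
  have e2: "qp q qi i = q * qp q qi (i - 1)" using qp_suc[OF assms, of "i - 1"] by simp
  from step2 e1 e2 have "q * qp q qi (a+(i - 1)) = qp q qi a * (q * qp q qi (i - 1))" by simp
  then have "qi * (q * qp q qi (a+(i - 1))) = qi * (qp q qi a * (q * qp q qi (i - 1)))" by simp
  moreover have c: "\<And>X. qi * (q * X) = X" using assms by (metis mult.assoc mult.commute mult_1)
  ultimately show ?case by (simp add: mult.left_commute[of _ q])
qed




lemma mmul_diag_right: "finite B \<Longrightarrow> mmul B A (\<lambda>y z. if y = z then d y else 0) x z = (if z \<in> B then A x z * d z else 0)"
  unfolding mmul_def by (simp add: if_distrib[of "\<lambda>t. _ * t"] sum.delta' cong: if_cong)
lemma mmul_diag_left: "finite B \<Longrightarrow> mmul B (\<lambda>x y. if x = y then d x else 0) A x z = (if x \<in> B then d x * A x z else 0)"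
  unfolding mmul_def by (simp add: if_distrib[of "\<lambda>t. t * _"] sum.delta cong: if_cong)

lemma vec_Kh: "vec_rep q qi (Kh h) = (\<lambda>j k. if j = k then qp q qi (h j) else 0)"
  by (simp add: vec_rep_def)

lemma finite_basis[simp]: "finite (basis n)" by (simp add: basis_def)

locale qc = fixes q qi :: "'a::comm_ring_1" and n :: nat
  assumes qqi: "q * qi = 1" and n1: "1 \<le> n"
begin
abbreviation "B \<equiv> basis n"
abbreviation "Vr \<equiv> vec_rep q qi"
abbreviation "Vd \<equiv> dual_rep q qi B Vr"
abbreviation "Vp \<equiv> dualp_rep q qi B Vr"

lemma qiq: "qi * q = 1" using qqi by (simp add: mult.commute)
lemma qp0[simp]: "qp q qi 0 = 1" by (simp add: qp_def)
lemma qp1[simp]: "qp q qi 1 = q" by (simp add: qp_def)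
lemma qpm1[simp]: "qp q qi (-1) = qi" by (simp add: qp_def)

lemma Vd_Kh: "Vd (Kh h) = (\<lambda>j k. if j = k then qp q qi (- h j) else 0)"
  by (intro ext) (auto simp: dual_rep_def transp_def vec_rep_def)
lemma Vp_Kh: "Vp (Kh h) = (\<lambda>j k. if j = k then qp q qi (- h j) else 0)"
  by (intro ext) (auto simp: dualp_rep_def transp_def vec_rep_def)

lemma Kpow_Kh: "Kpow i m = Kh (\<lambda>j. m * ((if j = i then 1 else 0) - (if j = Suc i then 1 else 0)))"
  by (simp add: Kpow_def)



lemma Vd_E:
  assumes "j \<in> B" "k \<in> B"
  shows "Vd (E i l) j k =
    (if l = 0 then (if j = k then 1 else 0) else if l = 1 then (if j = Suc i \<and> k = i then - qi else 0) else 0)"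
  using assms by (simp add: dual_rep_def transp_def smul_def Kpow_def vec_Kh mmul_diag_right)
     (auto simp: vec_rep_def)
lemma Vd_F:
  assumes "j \<in> B" "k \<in> B"
  shows "Vd (F i l) j k =
    (if l = 0 then (if j = k then 1 else 0) else if l = 1 then (if j = i \<and> k = Suc i then - q else 0) else 0)"
  using assms by (simp add: dual_rep_def transp_def smul_def Kpow_def vec_Kh mmul_diag_left)
     (auto simp: vec_rep_def)
lemma Vp_E:
  assumes "j \<in> B" "k \<in> B"
  shows "Vp (E i l) j k =
    (if l = 0 then (if j = k then 1 else 0) else if l = 1 then (if j = Suc i \<and> k = i then - q else 0) else 0)"
  using assms by (simp add: dualp_rep_def transp_def smul_def Kpow_def vec_Kh mmul_diag_left)
     (auto simp: vec_rep_def)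
lemma Vp_F:
  assumes "j \<in> B" "k \<in> B"
  shows "Vp (F i l) j k =
    (if l = 0 then (if j = k then 1 else 0) else if l = 1 then (if j = i \<and> k = Suc i then - qi else 0) else 0)"
  using assms by (simp add: dualp_rep_def transp_def smul_def Kpow_def vec_Kh mmul_diag_right)
     (auto simp: vec_rep_def)
end



lemma tensor_E0: "tensor_rep q qi B1 B2 \<rho> \<sigma> (E i 0) x y = kron (\<rho> (E i 0)) (mmul B2 (\<sigma> (E i 0)) (\<sigma> (Kpow i 0))) x y"
  by (simp add: tensor_rep_def qp_def)
lemma tensor_E1: "tensor_rep q qi B1 B2 \<rho> \<sigma> (E i (Suc 0)) x y = kron (\<rho> (E i 1)) (mmul B2 (\<sigma> (E i 0)) (\<sigma> (Kpow i (-1)))) x y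
   + kron (\<rho> (E i 0)) (mmul B2 (\<sigma> (E i 1)) (\<sigma> (Kpow i 0))) x y"
  by (simp add: tensor_rep_def qp_def)
lemma tensor_E2: "tensor_rep q qi B1 B2 \<rho> \<sigma> (E i 2) x y = kron (\<rho> (E i 2)) (mmul B2 (\<sigma> (E i 0)) (\<sigma> (Kpow i (-2)))) x y
   + qi * kron (\<rho> (E i 1)) (mmul B2 (\<sigma> (E i 1)) (\<sigma> (Kpow i (-1)))) x y
   + kron (\<rho> (E i 0)) (mmul B2 (\<sigma> (E i 2)) (\<sigma> (Kpow i 0))) x y"
  by (simp add: tensor_rep_def qp_def numeral_2_eq_2)
lemma tensor_F0: "tensor_rep q qi B1 B2 \<rho> \<sigma> (F i 0) x y = kron (mmul B1 (\<rho> (F i 0)) (\<rho> (Kpow i 0))) (\<sigma> (F i 0)) x y"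
  by (simp add: tensor_rep_def qp_def)
lemma tensor_F1: "tensor_rep q qi B1 B2 \<rho> \<sigma> (F i (Suc 0)) x y = kron (mmul B1 (\<rho> (F i 0)) (\<rho> (Kpow i 1))) (\<sigma> (F i 1)) x y
   + kron (mmul B1 (\<rho> (F i 1)) (\<rho> (Kpow i 0))) (\<sigma> (F i 0)) x y"
  by (simp add: tensor_rep_def qp_def)
lemma tensor_F2: "tensor_rep q qi B1 B2 \<rho> \<sigma> (F i 2) x y = kron (mmul B1 (\<rho> (F i 0)) (\<rho> (Kpow i 2))) (\<sigma> (F i 2)) x y
   + qi * kron (mmul B1 (\<rho> (F i 1)) (\<rho> (Kpow i 1))) (\<sigma> (F i 1)) x y
   + kron (mmul B1 (\<rho> (F i 2)) (\<rho> (Kpow i 0))) (\<sigma> (F i 0)) x y"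
  by (simp add: tensor_rep_def qp_def numeral_2_eq_2)

context qc begin

lemma TA_E1:
  assumes "x \<in> B" "y \<in> B" "a \<in> B" "b \<in> B"
  shows "tensor_rep q qi B B Vd Vr (E i (Suc 0)) (x,y) (a,b) =
    (if (x,y) = (Suc i, b) then (if a = i then - qi * (if b = i then qi else if b = Suc i then q else 1) else 0) else 0)
    + (if (x,y) = (a,i) then (if b = Suc i then 1 else 0) else 0)"
  using assms
  by (simp add: tensor_E1 kron_def Kpow_Kh vec_Kh mmul_diag_right Vd_E) (auto simp: vec_rep_def)

end



lemma mult_if0: "(f::'a::mult_zero) * (if P then X else 0) = (if P then f * X else 0)" by simp
lemma if0_mult: "(if P then X else 0) * (f::'a::mult_zero) = (if P then X * f else 0)" by simp

context qc begin

lemma TB_E1: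
  assumes "x \<in> B" "y \<in> B" "a \<in> B" "b \<in> B"
  shows "tensor_rep q qi B B Vr Vd (E i (Suc 0)) (x,y) (a,b) =
    (if (a,b) = (Suc i, y) then (if x = i then (if y = i then q else if y = Suc i then qi else 1) else 0) else 0)
    + (if (a,b) = (x,i) then (if y = Suc i then - qi else 0) else 0)"
  using assms
  by (simp add: tensor_E1 kron_def Kpow_Kh vec_Kh Vd_Kh mmul_diag_right Vd_E) (auto simp: vec_rep_def)

lemma psi_E1:
  assumes "a \<in> B" "b \<in> B" "c1 \<in> B" "c2 \<in> B" "1 \<le> i" "i < n"
  shows "(\<Sum>b'\<in>B \<times> B. psi_img q qi b' (c1,c2) * tensor_rep q qi B B Vd Vr (E i (Suc 0)) b' (a,b))
       = (\<Sum>c'\<in>B \<times> B. tensor_rep q qi B B Vr Vd (E i (Suc 0)) (c1,c2) c' * psi_img q qi (a,b) c')"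
proof -
  have L: "(\<Sum>b'\<in>B \<times> B. psi_img q qi b' (c1,c2) * tensor_rep q qi B B Vd Vr (E i (Suc 0)) b' (a,b))
    = (\<Sum>b'\<in>B \<times> B. psi_img q qi b' (c1,c2) * ((if b' = (Suc i, b) then (if a = i then - qi * (if b = i then qi else if b = Suc i then q else 1) else 0) else 0)
    + (if b' = (a,i) then (if b = Suc i then 1 else 0) else 0)))"
    by (rule sum.cong, simp, clarify, subst TA_E1, use assms in auto)
  have R: "(\<Sum>c'\<in>B \<times> B. tensor_rep q qi B B Vr Vd (E i (Suc 0)) (c1,c2) c' * psi_img q qi (a,b) c')
    = (\<Sum>c'\<in>B \<times> B. ((if c' = (Suc i, c2) then (if c1 = i then (if c2 = i then q else if c2 = Suc i then qi else 1) else 0) else 0)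
    + (if c' = (c1,i) then (if c2 = Suc i then - qi else 0) else 0)) * psi_img q qi (a,b) c')"
    by (rule sum.cong, simp, clarify, subst TB_E1, use assms in auto)
  show ?thesis unfolding L R
    using assms qqi qiq
    by (simp add: distrib_left distrib_right sum.distrib mult_if0 if0_mult sum.delta basis_def)
       (auto simp: psi_img_def algebra_simps)
qed

end



context qc begin

lemma qcanc1[simp]: "qi * (q * z) = z" using qqi by (metis mult.assoc mult.commute mult_1)
lemma qcanc2[simp]: "q * (qi * z) = z" using qqi by (metis mult.assoc mult_1)
lemma qp_neg1[simp]: "qp q qi (- x) * qp q qi x = 1"
  using qp_add[OF qqi, of "-x" x] by simp
lemma qp_neg2[simp]: "qp q qi x * qp q qi (- x) = 1"
  using qp_add[OF qqi, of x "-x"] by simp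

abbreviation "TA \<equiv> tensor_rep q qi B B Vd Vr"
abbreviation "TAp \<equiv> tensor_rep q qi B B Vp Vr"
abbreviation "TB \<equiv> tensor_rep q qi B B Vr Vd"

lemmas base_simps = kron_def Kpow_Kh vec_Kh Vd_Kh Vp_Kh mmul_diag_right Vd_E Vd_F Vp_E Vp_F

lemma TA_Kh: assumes "x \<in> B" "y \<in> B" "a \<in> B" "b \<in> B"
  shows "TA (Kh h) (x,y) (a,b) = (if (x,y) = (a,b) then qp q qi (- h a) * qp q qi (h b) else 0)"
  using assms by (simp add: tensor_rep_def base_simps)
lemma TAp_Kh: assumes "x \<in> B" "y \<in> B" "a \<in> B" "b \<in> B"
  shows "TAp (Kh h) (x,y) (a,b) = (if (x,y) = (a,b) then qp q qi (- h a) * qp q qi (h b) else 0)"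
  using assms by (simp add: tensor_rep_def base_simps)
lemma TB_Kh: assumes "x \<in> B" "y \<in> B" "a \<in> B" "b \<in> B"
  shows "TB (Kh h) (x,y) (a,b) = (if (a,b) = (x,y) then qp q qi (h x) * qp q qi (- h y) else 0)"
  using assms by (auto simp: tensor_rep_def base_simps)

lemma TA_E0: assumes "x \<in> B" "y \<in> B" "a \<in> B" "b \<in> B"
  shows "TA (E i 0) (x,y) (a,b) = (if (x,y) = (a,b) then 1 else 0)"
  using assms by (simp add: tensor_E0 base_simps) (auto simp: vec_rep_def)
lemma TAp_E0: assumes "x \<in> B" "y \<in> B" "a \<in> B" "b \<in> B"
  shows "TAp (E i 0) (x,y) (a,b) = (if (x,y) = (a,b) then 1 else 0)"
  using assms by (simp add: tensor_E0 base_simps) (auto simp: vec_rep_def)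
lemma TB_E0: assumes "x \<in> B" "y \<in> B" "a \<in> B" "b \<in> B"
  shows "TB (E i 0) (x,y) (a,b) = (if (a,b) = (x,y) then 1 else 0)"
  using assms by (simp add: tensor_E0 base_simps) (auto simp: vec_rep_def)
lemma TA_F0: assumes "x \<in> B" "y \<in> B" "a \<in> B" "b \<in> B"
  shows "TA (F i 0) (x,y) (a,b) = (if (x,y) = (a,b) then 1 else 0)"
  using assms by (simp add: tensor_F0 base_simps) (auto simp: vec_rep_def)
lemma TAp_F0: assumes "x \<in> B" "y \<in> B" "a \<in> B" "b \<in> B"
  shows "TAp (F i 0) (x,y) (a,b) = (if (x,y) = (a,b) then 1 else 0)"
  using assms by (simp add: tensor_F0 base_simps) (auto simp: vec_rep_def)
lemma TB_F0: assumes "x \<in> B" "y \<in> B" "a \<in> B" "b \<in> B"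
  shows "TB (F i 0) (x,y) (a,b) = (if (a,b) = (x,y) then 1 else 0)"
  using assms by (simp add: tensor_F0 base_simps) (auto simp: vec_rep_def)

lemma TAp_E1:
  assumes "x \<in> B" "y \<in> B" "a \<in> B" "b \<in> B"
  shows "TAp (E i (Suc 0)) (x,y) (a,b) =
    (if (x,y) = (Suc i, b) then (if a = i then - q * (if b = i then qi else if b = Suc i then q else 1) else 0) else 0)
    + (if (x,y) = (a,i) then (if b = Suc i then 1 else 0) else 0)"
  using assms by (simp add: tensor_E1 base_simps) (auto simp: vec_rep_def)

lemma TA_E2: assumes "x \<in> B" "y \<in> B" "a \<in> B" "b \<in> B"
  shows "TA (E i 2) (x,y) (a,b) = (if (x,y) = (Suc i, i) then (if a = i \<and> b = Suc i then - qi else 0) else 0)"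
  using assms qqi qiq by (simp add: tensor_E2 base_simps) (auto simp: vec_rep_def)
lemma TAp_E2: assumes "x \<in> B" "y \<in> B" "a \<in> B" "b \<in> B"
  shows "TAp (E i 2) (x,y) (a,b) = (if (x,y) = (Suc i, i) then (if a = i \<and> b = Suc i then - q else 0) else 0)"
  using assms qqi qiq by (simp add: tensor_E2 base_simps) (auto simp: vec_rep_def)
lemma TB_E2: assumes "x \<in> B" "y \<in> B" "a \<in> B" "b \<in> B"
  shows "TB (E i 2) (x,y) (a,b) = (if (a,b) = (Suc i, i) then (if x = i \<and> y = Suc i then - qi else 0) else 0)"
  using assms qqi qiq by (simp add: tensor_E2 base_simps) (auto simp: vec_rep_def)

lemma TA_F1:
  assumes "x \<in> B" "y \<in> B" "a \<in> B" "b \<in> B"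
  shows "TA (F i (Suc 0)) (x,y) (a,b) =
    (if (x,y) = (a, Suc i) then (if b = i then (if a = i then qi else if a = Suc i then q else 1) else 0) else 0)
    + (if (x,y) = (i,b) then (if a = Suc i then - q else 0) else 0)"
  using assms by (simp add: tensor_F1 base_simps) (auto simp: vec_rep_def)
lemma TAp_F1:
  assumes "x \<in> B" "y \<in> B" "a \<in> B" "b \<in> B"
  shows "TAp (F i (Suc 0)) (x,y) (a,b) =
    (if (x,y) = (a, Suc i) then (if b = i then (if a = i then qi else if a = Suc i then q else 1) else 0) else 0)
    + (if (x,y) = (i,b) then (if a = Suc i then - qi else 0) else 0)"
  using assms by (simp add: tensor_F1 base_simps) (auto simp: vec_rep_def)
lemma TB_F1:
  assumes "x \<in> B" "y \<in> B" "a \<in> B" "b \<in> B"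
  shows "TB (F i (Suc 0)) (x,y) (a,b) =
    (if (a,b) = (x, Suc i) then (if y = i then - q * (if x = i then q else if x = Suc i then qi else 1) else 0) else 0)
    + (if (a,b) = (i,y) then (if x = Suc i then 1 else 0) else 0)"
  using assms by (simp add: tensor_F1 base_simps) (auto simp: vec_rep_def)

lemma TA_F2: assumes "x \<in> B" "y \<in> B" "a \<in> B" "b \<in> B"
  shows "TA (F i 2) (x,y) (a,b) = (if (x,y) = (i, Suc i) then (if a = Suc i \<and> b = i then - q else 0) else 0)"
  using assms qqi qiq by (simp add: tensor_F2 base_simps) (auto simp: vec_rep_def)
lemma TAp_F2: assumes "x \<in> B" "y \<in> B" "a \<in> B" "b \<in> B"
  shows "TAp (F i 2) (x,y) (a,b) = (if (x,y) = (i, Suc i) then (if a = Suc i \<and> b = i then - qi else 0) else 0)"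
  using assms qqi qiq by (simp add: tensor_F2 base_simps) (auto simp: vec_rep_def)
lemma TB_F2: assumes "x \<in> B" "y \<in> B" "a \<in> B" "b \<in> B"
  shows "TB (F i 2) (x,y) (a,b) = (if (a,b) = (i, Suc i) then (if x = Suc i \<and> y = i then - q else 0) else 0)"
  using assms qqi qiq by (simp add: tensor_F2 base_simps) (auto simp: vec_rep_def)

lemma TA_Eb: assumes "x \<in> B" "y \<in> B" "a \<in> B" "b \<in> B" "2 < l"
  shows "TA (E i l) (x,y) (a,b) = 0"
  unfolding tensor_rep_def gen.case by (rule sum.neutral) (use assms in \<open>auto simp: base_simps vec_rep_def\<close>)
lemma TAp_Eb: assumes "x \<in> B" "y \<in> B" "a \<in> B" "b \<in> B" "2 < l"
  shows "TAp (E i l) (x,y) (a,b) = 0"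
  unfolding tensor_rep_def gen.case by (rule sum.neutral) (use assms in \<open>auto simp: base_simps vec_rep_def\<close>)
lemma TB_Eb: assumes "x \<in> B" "y \<in> B" "a \<in> B" "b \<in> B" "2 < l"
  shows "TB (E i l) (x,y) (a,b) = 0"
  unfolding tensor_rep_def gen.case by (rule sum.neutral) (use assms in \<open>auto simp: base_simps vec_rep_def\<close>)
lemma TA_Fb: assumes "x \<in> B" "y \<in> B" "a \<in> B" "b \<in> B" "2 < l"
  shows "TA (F i l) (x,y) (a,b) = 0"
  unfolding tensor_rep_def gen.case by (rule sum.neutral) (use assms in \<open>auto simp: base_simps vec_rep_def\<close>)
lemma TAp_Fb: assumes "x \<in> B" "y \<in> B" "a \<in> B" "b \<in> B" "2 < l"
  shows "TAp (F i l) (x,y) (a,b) = 0"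
  unfolding tensor_rep_def gen.case by (rule sum.neutral) (use assms in \<open>auto simp: base_simps vec_rep_def\<close>)
lemma TB_Fb: assumes "x \<in> B" "y \<in> B" "a \<in> B" "b \<in> B" "2 < l"
  shows "TB (F i l) (x,y) (a,b) = 0"
  unfolding tensor_rep_def gen.case by (rule sum.neutral) (use assms in \<open>auto simp: base_simps vec_rep_def\<close>)

end

 context qc begin
lemma chk_psi_Kh:
  assumes "a \<in> B" "b \<in> B" "c1 \<in> B" "c2 \<in> B"
  shows "(\<Sum>b'\<in>B \<times> B. psi_img q qi b' (c1,c2) * TA (Kh h) b' (a,b))
       = (\<Sum>c'\<in>B \<times> B. TB (Kh h) (c1,c2) c' * psi_img q qi (a,b) c')"
proof -
  have L: "(\<Sum>b'\<in>B \<times> B. psi_img q qi b' (c1,c2) * TA (Kh h) b' (a,b))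
    = (\<Sum>b'\<in>B \<times> B. psi_img q qi b' (c1,c2) * (if b' = (a,b) then qp q qi (- h a) * qp q qi (h b) else 0))"
    by (rule sum.cong, simp, clarify, subst TA_Kh, use assms in auto)
  have R: "(\<Sum>c'\<in>B \<times> B. TB (Kh h) (c1,c2) c' * psi_img q qi (a,b) c')
    = (\<Sum>c'\<in>B \<times> B. (if c' = (c1,c2) then qp q qi (h c1) * qp q qi (- h c2) else 0) * psi_img q qi (a,b) c')"
    by (rule sum.cong, simp, clarify, subst TB_Kh, use assms in auto)
  show ?thesis unfolding L R
    using assms qqi qiq
    by (simp add: distrib_left distrib_right sum.distrib mult_if0 if0_mult sum.delta sum.delta' basis_def;
       auto simp: psi_img_def algebra_simps)
qed

lemma chk_psip_Kh:
  assumes "a \<in> B" "b \<in> B" "c1 \<in> B" "c2 \<in> B" "\<And>j. W (Suc j) = qi * qi * W j"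
  shows "(\<Sum>b'\<in>B \<times> B. (W (fst b') * psi_img q qi b' (c1,c2)) * TAp (Kh h) b' (a,b))
       = (\<Sum>c'\<in>B \<times> B. TB (Kh h) (c1,c2) c' * (W a * psi_img q qi (a,b) c'))"
proof -
  have L: "(\<Sum>b'\<in>B \<times> B. (W (fst b') * psi_img q qi b' (c1,c2)) * TAp (Kh h) b' (a,b))
    = (\<Sum>b'\<in>B \<times> B. (W (fst b') * psi_img q qi b' (c1,c2)) * (if b' = (a,b) then qp q qi (- h a) * qp q qi (h b) else 0))"
    by (rule sum.cong, simp, clarify, subst TAp_Kh, use assms in auto)
  have R: "(\<Sum>c'\<in>B \<times> B. TB (Kh h) (c1,c2) c' * (W a * psi_img q qi (a,b) c'))
    = (\<Sum>c'\<in>B \<times> B. (if c' = (c1,c2) then qp q qi (h c1) * qp q qi (- h c2) else 0) * (W a * psi_img q qi (a,b) c'))"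
    by (rule sum.cong, simp, clarify, subst TB_Kh, use assms in auto)
  show ?thesis unfolding L R
    using assms qqi qiq
    by (simp add: distrib_left distrib_right sum.distrib mult_if0 if0_mult sum.delta sum.delta' basis_def;
       auto simp: psi_img_def algebra_simps)
qed

lemma chk_psi_E0:
  assumes "a \<in> B" "b \<in> B" "c1 \<in> B" "c2 \<in> B" "1 \<le> i" "i < n"
  shows "(\<Sum>b'\<in>B \<times> B. psi_img q qi b' (c1,c2) * TA (E i 0) b' (a,b))
       = (\<Sum>c'\<in>B \<times> B. TB (E i 0) (c1,c2) c' * psi_img q qi (a,b) c')"
proof -
  have L: "(\<Sum>b'\<in>B \<times> B. psi_img q qi b' (c1,c2) * TA (E i 0) b' (a,b))
    = (\<Sum>b'\<in>B \<times> B. psi_img q qi b' (c1,c2) * (if b' = (a,b) then 1 else 0))"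
    by (rule sum.cong, simp, clarify, subst TA_E0, use assms in auto)
  have R: "(\<Sum>c'\<in>B \<times> B. TB (E i 0) (c1,c2) c' * psi_img q qi (a,b) c')
    = (\<Sum>c'\<in>B \<times> B. (if c' = (c1,c2) then 1 else 0) * psi_img q qi (a,b) c')"
    by (rule sum.cong, simp, clarify, subst TB_E0, use assms in auto)
  show ?thesis unfolding L R
    using assms qqi qiq
    by (simp add: distrib_left distrib_right sum.distrib mult_if0 if0_mult sum.delta sum.delta' basis_def;
       auto simp: psi_img_def algebra_simps)
qed

lemma chk_psip_E0:
  assumes "a \<in> B" "b \<in> B" "c1 \<in> B" "c2 \<in> B" "1 \<le> i" "i < n" "\<And>j. W (Suc j) = qi * qi * W j"
  shows "(\<Sum>b'\<in>B \<times> B. (W (fst b') * psi_img q qi b' (c1,c2)) * TAp (E i 0) b' (a,b))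
       = (\<Sum>c'\<in>B \<times> B. TB (E i 0) (c1,c2) c' * (W a * psi_img q qi (a,b) c'))"
proof -
  have L: "(\<Sum>b'\<in>B \<times> B. (W (fst b') * psi_img q qi b' (c1,c2)) * TAp (E i 0) b' (a,b))
    = (\<Sum>b'\<in>B \<times> B. (W (fst b') * psi_img q qi b' (c1,c2)) * (if b' = (a,b) then 1 else 0))"
    by (rule sum.cong, simp, clarify, subst TAp_E0, use assms in auto)
  have R: "(\<Sum>c'\<in>B \<times> B. TB (E i 0) (c1,c2) c' * (W a * psi_img q qi (a,b) c'))
    = (\<Sum>c'\<in>B \<times> B. (if c' = (c1,c2) then 1 else 0) * (W a * psi_img q qi (a,b) c'))"
    by (rule sum.cong, simp, clarify, subst TB_E0, use assms in auto)
  show ?thesis unfolding L R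
    using assms qqi qiq
    by (simp add: distrib_left distrib_right sum.distrib mult_if0 if0_mult sum.delta sum.delta' basis_def;
       auto simp: psi_img_def algebra_simps)
qed

lemma chk_psi_F0:
  assumes "a \<in> B" "b \<in> B" "c1 \<in> B" "c2 \<in> B" "1 \<le> i" "i < n"
  shows "(\<Sum>b'\<in>B \<times> B. psi_img q qi b' (c1,c2) * TA (F i 0) b' (a,b))
       = (\<Sum>c'\<in>B \<times> B. TB (F i 0) (c1,c2) c' * psi_img q qi (a,b) c')"
proof -
  have L: "(\<Sum>b'\<in>B \<times> B. psi_img q qi b' (c1,c2) * TA (F i 0) b' (a,b))
    = (\<Sum>b'\<in>B \<times> B. psi_img q qi b' (c1,c2) * (if b' = (a,b) then 1 else 0))"
    by (rule sum.cong, simp, clarify, subst TA_F0, use assms in auto)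
  have R: "(\<Sum>c'\<in>B \<times> B. TB (F i 0) (c1,c2) c' * psi_img q qi (a,b) c')
    = (\<Sum>c'\<in>B \<times> B. (if c' = (c1,c2) then 1 else 0) * psi_img q qi (a,b) c')"
    by (rule sum.cong, simp, clarify, subst TB_F0, use assms in auto)
  show ?thesis unfolding L R
    using assms qqi qiq
    by (simp add: distrib_left distrib_right sum.distrib mult_if0 if0_mult sum.delta sum.delta' basis_def;
       auto simp: psi_img_def algebra_simps)
qed

lemma chk_psip_F0:
  assumes "a \<in> B" "b \<in> B" "c1 \<in> B" "c2 \<in> B" "1 \<le> i" "i < n" "\<And>j. W (Suc j) = qi * qi * W j"
  shows "(\<Sum>b'\<in>B \<times> B. (W (fst b') * psi_img q qi b' (c1,c2)) * TAp (F i 0) b' (a,b))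
       = (\<Sum>c'\<in>B \<times> B. TB (F i 0) (c1,c2) c' * (W a * psi_img q qi (a,b) c'))"
proof -
  have L: "(\<Sum>b'\<in>B \<times> B. (W (fst b') * psi_img q qi b' (c1,c2)) * TAp (F i 0) b' (a,b))
    = (\<Sum>b'\<in>B \<times> B. (W (fst b') * psi_img q qi b' (c1,c2)) * (if b' = (a,b) then 1 else 0))"
    by (rule sum.cong, simp, clarify, subst TAp_F0, use assms in auto)
  have R: "(\<Sum>c'\<in>B \<times> B. TB (F i 0) (c1,c2) c' * (W a * psi_img q qi (a,b) c'))
    = (\<Sum>c'\<in>B \<times> B. (if c' = (c1,c2) then 1 else 0) * (W a * psi_img q qi (a,b) c'))"
    by (rule sum.cong, simp, clarify, subst TB_F0, use assms in auto)
  show ?thesis unfolding L R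
    using assms qqi qiq
    by (simp add: distrib_left distrib_right sum.distrib mult_if0 if0_mult sum.delta sum.delta' basis_def;
       auto simp: psi_img_def algebra_simps)
qed

lemma chk_psi_E1:
  assumes "a \<in> B" "b \<in> B" "c1 \<in> B" "c2 \<in> B" "1 \<le> i" "i < n"
  shows "(\<Sum>b'\<in>B \<times> B. psi_img q qi b' (c1,c2) * TA (E i (Suc 0)) b' (a,b))
       = (\<Sum>c'\<in>B \<times> B. TB (E i (Suc 0)) (c1,c2) c' * psi_img q qi (a,b) c')"
proof -
  have L: "(\<Sum>b'\<in>B \<times> B. psi_img q qi b' (c1,c2) * TA (E i (Suc 0)) b' (a,b))
    = (\<Sum>b'\<in>B \<times> B. psi_img q qi b' (c1,c2) * ((if b' = (Suc i, b) then (if a = i then - qi * (if b = i then qi else if b = Suc i then q else 1) else 0) else 0) + (if b' = (a,i) then (if b = Suc i then 1 else 0) else 0)))"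
    by (rule sum.cong, simp, clarify, subst TA_E1, use assms in auto)
  have R: "(\<Sum>c'\<in>B \<times> B. TB (E i (Suc 0)) (c1,c2) c' * psi_img q qi (a,b) c')
    = (\<Sum>c'\<in>B \<times> B. ((if c' = (Suc i, c2) then (if c1 = i then (if c2 = i then q else if c2 = Suc i then qi else 1) else 0) else 0) + (if c' = (c1,i) then (if c2 = Suc i then - qi else 0) else 0)) * psi_img q qi (a,b) c')"
    by (rule sum.cong, simp, clarify, subst TB_E1, use assms in auto)
  show ?thesis unfolding L R
    using assms qqi qiq
    by (simp add: distrib_left distrib_right sum.distrib mult_if0 if0_mult sum.delta sum.delta' basis_def;
       auto simp: psi_img_def algebra_simps)
qed

lemma chk_psip_E1:
  assumes "a \<in> B" "b \<in> B" "c1 \<in> B" "c2 \<in> B" "1 \<le> i" "i < n" "\<And>j. W (Suc j) = qi * qi * W j"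
  shows "(\<Sum>b'\<in>B \<times> B. (W (fst b') * psi_img q qi b' (c1,c2)) * TAp (E i (Suc 0)) b' (a,b))
       = (\<Sum>c'\<in>B \<times> B. TB (E i (Suc 0)) (c1,c2) c' * (W a * psi_img q qi (a,b) c'))"
proof -
  have L: "(\<Sum>b'\<in>B \<times> B. (W (fst b') * psi_img q qi b' (c1,c2)) * TAp (E i (Suc 0)) b' (a,b))
    = (\<Sum>b'\<in>B \<times> B. (W (fst b') * psi_img q qi b' (c1,c2)) * ((if b' = (Suc i, b) then (if a = i then - q * (if b = i then qi else if b = Suc i then q else 1) else 0) else 0) + (if b' = (a,i) then (if b = Suc i then 1 else 0) else 0)))"
    by (rule sum.cong, simp, clarify, subst TAp_E1, use assms in auto)
  have R: "(\<Sum>c'\<in>B \<times> B. TB (E i (Suc 0)) (c1,c2) c' * (W a * psi_img q qi (a,b) c'))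
    = (\<Sum>c'\<in>B \<times> B. ((if c' = (Suc i, c2) then (if c1 = i then (if c2 = i then q else if c2 = Suc i then qi else 1) else 0) else 0) + (if c' = (c1,i) then (if c2 = Suc i then - qi else 0) else 0)) * (W a * psi_img q qi (a,b) c'))"
    by (rule sum.cong, simp, clarify, subst TB_E1, use assms in auto)
  show ?thesis unfolding L R
    using assms qqi qiq
    by (simp add: distrib_left distrib_right sum.distrib mult_if0 if0_mult sum.delta sum.delta' basis_def;
       auto simp: psi_img_def algebra_simps)
qed

lemma chk_psi_E2:
  assumes "a \<in> B" "b \<in> B" "c1 \<in> B" "c2 \<in> B" "1 \<le> i" "i < n"
  shows "(\<Sum>b'\<in>B \<times> B. psi_img q qi b' (c1,c2) * TA (E i 2) b' (a,b))
       = (\<Sum>c'\<in>B \<times> B. TB (E i 2) (c1,c2) c' * psi_img q qi (a,b) c')"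
proof -
  have L: "(\<Sum>b'\<in>B \<times> B. psi_img q qi b' (c1,c2) * TA (E i 2) b' (a,b))
    = (\<Sum>b'\<in>B \<times> B. psi_img q qi b' (c1,c2) * (if b' = (Suc i, i) then (if a = i \<and> b = Suc i then - qi else 0) else 0))"
    by (rule sum.cong, simp, clarify, subst TA_E2, use assms in auto)
  have R: "(\<Sum>c'\<in>B \<times> B. TB (E i 2) (c1,c2) c' * psi_img q qi (a,b) c')
    = (\<Sum>c'\<in>B \<times> B. (if c' = (Suc i, i) then (if c1 = i \<and> c2 = Suc i then - qi else 0) else 0) * psi_img q qi (a,b) c')"
    by (rule sum.cong, simp, clarify, subst TB_E2, use assms in auto)
  show ?thesis unfolding L R
    using assms qqi qiq
    by (simp add: distrib_left distrib_right sum.distrib mult_if0 if0_mult sum.delta sum.delta' basis_def;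
       auto simp: psi_img_def algebra_simps)
qed

lemma chk_psip_E2:
  assumes "a \<in> B" "b \<in> B" "c1 \<in> B" "c2 \<in> B" "1 \<le> i" "i < n" "\<And>j. W (Suc j) = qi * qi * W j"
  shows "(\<Sum>b'\<in>B \<times> B. (W (fst b') * psi_img q qi b' (c1,c2)) * TAp (E i 2) b' (a,b))
       = (\<Sum>c'\<in>B \<times> B. TB (E i 2) (c1,c2) c' * (W a * psi_img q qi (a,b) c'))"
proof -
  have L: "(\<Sum>b'\<in>B \<times> B. (W (fst b') * psi_img q qi b' (c1,c2)) * TAp (E i 2) b' (a,b))
    = (\<Sum>b'\<in>B \<times> B. (W (fst b') * psi_img q qi b' (c1,c2)) * (if b' = (Suc i, i) then (if a = i \<and> b = Suc i then - q else 0) else 0))"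
    by (rule sum.cong, simp, clarify, subst TAp_E2, use assms in auto)
  have R: "(\<Sum>c'\<in>B \<times> B. TB (E i 2) (c1,c2) c' * (W a * psi_img q qi (a,b) c'))
    = (\<Sum>c'\<in>B \<times> B. (if c' = (Suc i, i) then (if c1 = i \<and> c2 = Suc i then - qi else 0) else 0) * (W a * psi_img q qi (a,b) c'))"
    by (rule sum.cong, simp, clarify, subst TB_E2, use assms in auto)
  show ?thesis unfolding L R
    using assms qqi qiq
    by (simp add: distrib_left distrib_right sum.distrib mult_if0 if0_mult sum.delta sum.delta' basis_def;
       auto simp: psi_img_def algebra_simps)
qed

lemma chk_psi_F1:
  assumes "a \<in> B" "b \<in> B" "c1 \<in> B" "c2 \<in> B" "1 \<le> i" "i < n"
  shows "(\<Sum>b'\<in>B \<times> B. psi_img q qi b' (c1,c2) * TA (F i (Suc 0)) b' (a,b))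
       = (\<Sum>c'\<in>B \<times> B. TB (F i (Suc 0)) (c1,c2) c' * psi_img q qi (a,b) c')"
proof -
  have L: "(\<Sum>b'\<in>B \<times> B. psi_img q qi b' (c1,c2) * TA (F i (Suc 0)) b' (a,b))
    = (\<Sum>b'\<in>B \<times> B. psi_img q qi b' (c1,c2) * ((if b' = (a, Suc i) then (if b = i then (if a = i then qi else if a = Suc i then q else 1) else 0) else 0) + (if b' = (i,b) then (if a = Suc i then - q else 0) else 0)))"
    by (rule sum.cong, simp, clarify, subst TA_F1, use assms in auto)
  have R: "(\<Sum>c'\<in>B \<times> B. TB (F i (Suc 0)) (c1,c2) c' * psi_img q qi (a,b) c')
    = (\<Sum>c'\<in>B \<times> B. ((if c' = (c1, Suc i) then (if c2 = i then - q * (if c1 = i then q else if c1 = Suc i then qi else 1) else 0) else 0) + (if c' = (i,c2) then (if c1 = Suc i then 1 else 0) else 0)) * psi_img q qi (a,b) c')"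
    by (rule sum.cong, simp, clarify, subst TB_F1, use assms in auto)
  show ?thesis unfolding L R
    using assms qqi qiq
    by (simp add: distrib_left distrib_right sum.distrib mult_if0 if0_mult sum.delta sum.delta' basis_def;
       auto simp: psi_img_def algebra_simps)
qed

lemma chk_psip_F1:
  assumes "a \<in> B" "b \<in> B" "c1 \<in> B" "c2 \<in> B" "1 \<le> i" "i < n" "\<And>j. W (Suc j) = qi * qi * W j"
  shows "(\<Sum>b'\<in>B \<times> B. (W (fst b') * psi_img q qi b' (c1,c2)) * TAp (F i (Suc 0)) b' (a,b))
       = (\<Sum>c'\<in>B \<times> B. TB (F i (Suc 0)) (c1,c2) c' * (W a * psi_img q qi (a,b) c'))"
proof -
  have L: "(\<Sum>b'\<in>B \<times> B. (W (fst b') * psi_img q qi b' (c1,c2)) * TAp (F i (Suc 0)) b' (a,b))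
    = (\<Sum>b'\<in>B \<times> B. (W (fst b') * psi_img q qi b' (c1,c2)) * ((if b' = (a, Suc i) then (if b = i then (if a = i then qi else if a = Suc i then q else 1) else 0) else 0) + (if b' = (i,b) then (if a = Suc i then - qi else 0) else 0)))"
    by (rule sum.cong, simp, clarify, subst TAp_F1, use assms in auto)
  have R: "(\<Sum>c'\<in>B \<times> B. TB (F i (Suc 0)) (c1,c2) c' * (W a * psi_img q qi (a,b) c'))
    = (\<Sum>c'\<in>B \<times> B. ((if c' = (c1, Suc i) then (if c2 = i then - q * (if c1 = i then q else if c1 = Suc i then qi else 1) else 0) else 0) + (if c' = (i,c2) then (if c1 = Suc i then 1 else 0) else 0)) * (W a * psi_img q qi (a,b) c'))"
    by (rule sum.cong, simp, clarify, subst TB_F1, use assms in auto)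
  show ?thesis unfolding L R
    using assms qqi qiq
    by (simp add: distrib_left distrib_right sum.distrib mult_if0 if0_mult sum.delta sum.delta' basis_def;
       auto simp: psi_img_def algebra_simps)
qed

lemma chk_psi_F2:
  assumes "a \<in> B" "b \<in> B" "c1 \<in> B" "c2 \<in> B" "1 \<le> i" "i < n"
  shows "(\<Sum>b'\<in>B \<times> B. psi_img q qi b' (c1,c2) * TA (F i 2) b' (a,b))
       = (\<Sum>c'\<in>B \<times> B. TB (F i 2) (c1,c2) c' * psi_img q qi (a,b) c')"
proof -
  have L: "(\<Sum>b'\<in>B \<times> B. psi_img q qi b' (c1,c2) * TA (F i 2) b' (a,b))
    = (\<Sum>b'\<in>B \<times> B. psi_img q qi b' (c1,c2) * (if b' = (i, Suc i) then (if a = Suc i \<and> b = i then - q else 0) else 0))"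
    by (rule sum.cong, simp, clarify, subst TA_F2, use assms in auto)
  have R: "(\<Sum>c'\<in>B \<times> B. TB (F i 2) (c1,c2) c' * psi_img q qi (a,b) c')
    = (\<Sum>c'\<in>B \<times> B. (if c' = (i, Suc i) then (if c1 = Suc i \<and> c2 = i then - q else 0) else 0) * psi_img q qi (a,b) c')"
    by (rule sum.cong, simp, clarify, subst TB_F2, use assms in auto)
  show ?thesis unfolding L R
    using assms qqi qiq
    by (simp add: distrib_left distrib_right sum.distrib mult_if0 if0_mult sum.delta sum.delta' basis_def;
       auto simp: psi_img_def algebra_simps)
qed

lemma chk_psip_F2:
  assumes "a \<in> B" "b \<in> B" "c1 \<in> B" "c2 \<in> B" "1 \<le> i" "i < n" "\<And>j. W (Suc j) = qi * qi * W j"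
  shows "(\<Sum>b'\<in>B \<times> B. (W (fst b') * psi_img q qi b' (c1,c2)) * TAp (F i 2) b' (a,b))
       = (\<Sum>c'\<in>B \<times> B. TB (F i 2) (c1,c2) c' * (W a * psi_img q qi (a,b) c'))"
proof -
  have L: "(\<Sum>b'\<in>B \<times> B. (W (fst b') * psi_img q qi b' (c1,c2)) * TAp (F i 2) b' (a,b))
    = (\<Sum>b'\<in>B \<times> B. (W (fst b') * psi_img q qi b' (c1,c2)) * (if b' = (i, Suc i) then (if a = Suc i \<and> b = i then - qi else 0) else 0))"
    by (rule sum.cong, simp, clarify, subst TAp_F2, use assms in auto)
  have R: "(\<Sum>c'\<in>B \<times> B. TB (F i 2) (c1,c2) c' * (W a * psi_img q qi (a,b) c'))
    = (\<Sum>c'\<in>B \<times> B. (if c' = (i, Suc i) then (if c1 = Suc i \<and> c2 = i then - q else 0) else 0) * (W a * psi_img q qi (a,b) c'))"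
    by (rule sum.cong, simp, clarify, subst TB_F2, use assms in auto)
  show ?thesis unfolding L R
    using assms qqi qiq
    by (simp add: distrib_left distrib_right sum.distrib mult_if0 if0_mult sum.delta sum.delta' basis_def;
       auto simp: psi_img_def algebra_simps)
qed

lemma chk_psi_Eb:
  assumes "a \<in> B" "b \<in> B" "c1 \<in> B" "c2 \<in> B" "1 \<le> i" "i < n" "2 < l"
  shows "(\<Sum>b'\<in>B \<times> B. psi_img q qi b' (c1,c2) * TA (E i l) b' (a,b))
       = (\<Sum>c'\<in>B \<times> B. TB (E i l) (c1,c2) c' * psi_img q qi (a,b) c')"
proof -
  have L: "(\<Sum>b'\<in>B \<times> B. psi_img q qi b' (c1,c2) * TA (E i l) b' (a,b))
    = (\<Sum>b'\<in>B \<times> B. psi_img q qi b' (c1,c2) * 0)"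
    by (rule sum.cong, simp, clarify, subst TA_Eb, use assms in auto)
  have R: "(\<Sum>c'\<in>B \<times> B. TB (E i l) (c1,c2) c' * psi_img q qi (a,b) c')
    = (\<Sum>c'\<in>B \<times> B. 0 * psi_img q qi (a,b) c')"
    by (rule sum.cong, simp, clarify, subst TB_Eb, use assms in auto)
  show ?thesis unfolding L R
    using assms qqi qiq
    by (simp add: distrib_left distrib_right sum.distrib mult_if0 if0_mult sum.delta sum.delta' basis_def;
       auto simp: psi_img_def algebra_simps)
qed

lemma chk_psip_Eb:
  assumes "a \<in> B" "b \<in> B" "c1 \<in> B" "c2 \<in> B" "1 \<le> i" "i < n" "2 < l" "\<And>j. W (Suc j) = qi * qi * W j"
  shows "(\<Sum>b'\<in>B \<times> B. (W (fst b') * psi_img q qi b' (c1,c2)) * TAp (E i l) b' (a,b))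
       = (\<Sum>c'\<in>B \<times> B. TB (E i l) (c1,c2) c' * (W a * psi_img q qi (a,b) c'))"
proof -
  have L: "(\<Sum>b'\<in>B \<times> B. (W (fst b') * psi_img q qi b' (c1,c2)) * TAp (E i l) b' (a,b))
    = (\<Sum>b'\<in>B \<times> B. (W (fst b') * psi_img q qi b' (c1,c2)) * 0)"
    by (rule sum.cong, simp, clarify, subst TAp_Eb, use assms in auto)
  have R: "(\<Sum>c'\<in>B \<times> B. TB (E i l) (c1,c2) c' * (W a * psi_img q qi (a,b) c'))
    = (\<Sum>c'\<in>B \<times> B. 0 * (W a * psi_img q qi (a,b) c'))"
    by (rule sum.cong, simp, clarify, subst TB_Eb, use assms in auto)
  show ?thesis unfolding L R
    using assms qqi qiq
    by (simp add: distrib_left distrib_right sum.distrib mult_if0 if0_mult sum.delta sum.delta' basis_def;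
       auto simp: psi_img_def algebra_simps)
qed

lemma chk_psi_Fb:
  assumes "a \<in> B" "b \<in> B" "c1 \<in> B" "c2 \<in> B" "1 \<le> i" "i < n" "2 < l"
  shows "(\<Sum>b'\<in>B \<times> B. psi_img q qi b' (c1,c2) * TA (F i l) b' (a,b))
       = (\<Sum>c'\<in>B \<times> B. TB (F i l) (c1,c2) c' * psi_img q qi (a,b) c')"
proof -
  have L: "(\<Sum>b'\<in>B \<times> B. psi_img q qi b' (c1,c2) * TA (F i l) b' (a,b))
    = (\<Sum>b'\<in>B \<times> B. psi_img q qi b' (c1,c2) * 0)"
    by (rule sum.cong, simp, clarify, subst TA_Fb, use assms in auto)
  have R: "(\<Sum>c'\<in>B \<times> B. TB (F i l) (c1,c2) c' * psi_img q qi (a,b) c')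
    = (\<Sum>c'\<in>B \<times> B. 0 * psi_img q qi (a,b) c')"
    by (rule sum.cong, simp, clarify, subst TB_Fb, use assms in auto)
  show ?thesis unfolding L R
    using assms qqi qiq
    by (simp add: distrib_left distrib_right sum.distrib mult_if0 if0_mult sum.delta sum.delta' basis_def;
       auto simp: psi_img_def algebra_simps)
qed

lemma chk_psip_Fb:
  assumes "a \<in> B" "b \<in> B" "c1 \<in> B" "c2 \<in> B" "1 \<le> i" "i < n" "2 < l" "\<And>j. W (Suc j) = qi * qi * W j"
  shows "(\<Sum>b'\<in>B \<times> B. (W (fst b') * psi_img q qi b' (c1,c2)) * TAp (F i l) b' (a,b))
       = (\<Sum>c'\<in>B \<times> B. TB (F i l) (c1,c2) c' * (W a * psi_img q qi (a,b) c'))"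
proof -
  have L: "(\<Sum>b'\<in>B \<times> B. (W (fst b') * psi_img q qi b' (c1,c2)) * TAp (F i l) b' (a,b))
    = (\<Sum>b'\<in>B \<times> B. (W (fst b') * psi_img q qi b' (c1,c2)) * 0)"
    by (rule sum.cong, simp, clarify, subst TAp_Fb, use assms in auto)
  have R: "(\<Sum>c'\<in>B \<times> B. TB (F i l) (c1,c2) c' * (W a * psi_img q qi (a,b) c'))
    = (\<Sum>c'\<in>B \<times> B. 0 * (W a * psi_img q qi (a,b) c'))"
    by (rule sum.cong, simp, clarify, subst TB_Fb, use assms in auto)
  show ?thesis unfolding L R
    using assms qqi qiq
    by (simp add: distrib_left distrib_right sum.distrib mult_if0 if0_mult sum.delta sum.delta' basis_def;
       auto simp: psi_img_def algebra_simps)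
qed
end 


lemma intertw:
  fixes img :: "'b \<Rightarrow> 'b \<Rightarrow> 'a::comm_ring_1"
  assumes fin: "finite P" and zero: "\<And>b' c. b' \<in> P \<Longrightarrow> c \<notin> P \<Longrightarrow> img b' c = 0"
    and chk: "\<And>b c. b \<in> P \<Longrightarrow> c \<in> P \<Longrightarrow> (\<Sum>b'\<in>P. img b' c * M1 b' b) = (\<Sum>c'\<in>P. M2 c c' * img b c')"
    and x: "x \<in> carrier P"
  shows "lin_ext P img (act P M1 x) = act P M2 (lin_ext P img x)"
proof (rule ext)
  fix c
  have L: "lin_ext P img (act P M1 x) c = (\<Sum>b'\<in>P. (\<Sum>b\<in>P. M1 b' b * x b) * img b' c)"
    unfolding lin_ext_def act_def by (rule sum.cong) auto
  show "lin_ext P img (act P M1 x) c = act P M2 (lin_ext P img x) c"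
  proof (cases "c \<in> P")
    case True
    have "(\<Sum>b'\<in>P. (\<Sum>b\<in>P. M1 b' b * x b) * img b' c) = (\<Sum>b'\<in>P. \<Sum>b\<in>P. x b * (img b' c * M1 b' b))"
      unfolding sum_distrib_right by (simp add: mult_ac)
    also have "\<dots> = (\<Sum>b\<in>P. \<Sum>b'\<in>P. x b * (img b' c * M1 b' b))" by (rule sum.swap)
    also have "\<dots> = (\<Sum>b\<in>P. x b * (\<Sum>b'\<in>P. img b' c * M1 b' b))" by (simp add: sum_distrib_left)
    also have "\<dots> = (\<Sum>b\<in>P. x b * (\<Sum>c'\<in>P. M2 c c' * img b c'))"
      using chk True by (intro sum.cong) auto
    also have "\<dots> = (\<Sum>b\<in>P. \<Sum>c'\<in>P. M2 c c' * (x b * img b c'))" by (simp add: sum_distrib_left mult_ac)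
    also have "\<dots> = (\<Sum>c'\<in>P. \<Sum>b\<in>P. M2 c c' * (x b * img b c'))" by (rule sum.swap)
    also have "\<dots> = act P M2 (lin_ext P img x) c"
      using True by (simp add: act_def lin_ext_def sum_distrib_left)
    finally show ?thesis using L by simp
  next
    case False
    then show ?thesis using L zero by (simp add: act_def)
  qed
qed

lemma lin_ext_carrier:
  assumes "\<And>b' c. b' \<in> P \<Longrightarrow> c \<notin> P \<Longrightarrow> img b' c = 0"
  shows "lin_ext P img x \<in> carrier P"
  using assms by (simp add: carrier_def lin_ext_def)

lemma lin_ext_diff: "lin_ext P img (\<lambda>b. x b - y b) = (\<lambda>c. lin_ext P img x c - lin_ext P img y c)"
  by (simp add: lin_ext_def sum_subtractf algebra_simps)
lemma lin_ext_add: "lin_ext P img (\<lambda>b. x b + y b) = (\<lambda>c. lin_ext P img x c + lin_ext P img y c)"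
  by (simp add: lin_ext_def sum.distrib algebra_simps)
lemma lin_ext_scale: "lin_ext P img (\<lambda>b. r * x b) = (\<lambda>c. r * lin_ext P img x c)"
  by (simp add: lin_ext_def sum_distrib_left algebra_simps)
lemma lin_ext_zero: "lin_ext P img (\<lambda>b. 0) = (\<lambda>c. 0)"
  by (simp add: lin_ext_def)
lemma lin_ext_unit: "finite P \<Longrightarrow> b \<in> P \<Longrightarrow> lin_ext P img (\<lambda>b'. if b' = b then 1 else 0) = img b"
  by (simp add: lin_ext_def if_distrib[of "\<lambda>t. t * _"] sum.delta cong: if_cong)

lemma surj_gen:
  fixes img :: "'b \<Rightarrow> 'b \<Rightarrow> 'a::comm_ring_1"
  assumes fin: "finite P"
    and units: "\<And>b. b \<in> P \<Longrightarrow> (\<lambda>c. if c = b then 1 else 0) \<in> lin_ext P img ` carrier P"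
    and y: "y \<in> carrier P"
  shows "y \<in> lin_ext P img ` carrier P"
proof -
  let ?S = "lin_ext P img ` carrier P"
  have add: "(\<lambda>c. f c + g c) \<in> ?S" if "f \<in> ?S" "g \<in> ?S" for f g
  proof -
    from that obtain u v where "u \<in> carrier P" "v \<in> carrier P" "f = lin_ext P img u" "g = lin_ext P img v" by blast
    then show ?thesis by (intro image_eqI[where x="\<lambda>b. u b + v b"]) (auto simp: lin_ext_add carrier_def)
  qed
  have sc: "(\<lambda>c. r * f c) \<in> ?S" if "f \<in> ?S" for f r
  proof -
    from that obtain u where "u \<in> carrier P" "f = lin_ext P img u" by blast
    then show ?thesis by (intro image_eqI[where x="\<lambda>b. r * u b"]) (auto simp: lin_ext_scale carrier_def)
  qed
  have z: "(\<lambda>c. 0) \<in> ?S"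
    by (intro image_eqI[where x="\<lambda>b. 0"]) (auto simp: lin_ext_zero carrier_def)
  have sums: "finite A \<Longrightarrow> A \<subseteq> P \<Longrightarrow> (\<lambda>c. \<Sum>b\<in>A. y b * (if c = b then 1 else 0)) \<in> ?S" for A
  proof (induction A rule: finite_induct)
    case empty then show ?case using z by simp
  next
    case (insert a A)
    have "(\<lambda>c. y a * (if c = a then 1 else 0) + (\<Sum>b\<in>A. y b * (if c = b then 1 else 0))) \<in> ?S"
      using insert by (intro add sc units) auto
    then show ?case using insert by simp
  qed
  have "y = (\<lambda>c. \<Sum>b\<in>P. y b * (if c = b then 1 else 0))"
  proof
    fix c show "y c = (\<Sum>b\<in>P. y b * (if c = b then 1 else 0))"
      using y fin by (cases "c \<in> P") (auto simp: carrier_def if_distrib[of "\<lambda>t. _ * t"] sum.delta cong: if_cong)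
  qed
  then show ?thesis using sums[OF fin subset_refl] by metis
qed




lemma S_add: "f \<in> lin_ext P img ` carrier P \<Longrightarrow> g \<in> lin_ext P img ` carrier P \<Longrightarrow> (\<lambda>c. f c + g c) \<in> lin_ext P img ` carrier P"
  by (auto simp: lin_ext_add[symmetric] carrier_def)
lemma S_scale: "f \<in> lin_ext P img ` carrier P \<Longrightarrow> (\<lambda>c. r * f c) \<in> lin_ext P img ` carrier P"
  by (auto simp: lin_ext_scale[symmetric] carrier_def)
lemma S_zero: "(\<lambda>c. 0) \<in> lin_ext P img ` carrier P"
  by (rule image_eqI[where x="\<lambda>b. 0"]) (auto simp: lin_ext_zero carrier_def)
lemma S_sum: "finite A \<Longrightarrow> (\<And>j. j \<in> A \<Longrightarrow> Fm j \<in> lin_ext P img ` carrier P) \<Longrightarrow> (\<lambda>c. \<Sum>j\<in>A. Fm j c) \<in> lin_ext P img ` carrier P"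
proof (induction A rule: finite_induct)
  case empty then show ?case using S_zero by simp
next
  case (insert a A)
  then have "(\<lambda>c. Fm a c + (\<Sum>j\<in>A. Fm j c)) \<in> lin_ext P img ` carrier P" by (intro S_add) auto
  then show ?case using insert by simp
qed
lemma S_col: "finite P \<Longrightarrow> b \<in> P \<Longrightarrow> img b \<in> lin_ext P img ` carrier P"
  by (rule image_eqI[where x="\<lambda>b'. if b' = b then 1 else 0"]) (auto simp: lin_ext_unit carrier_def)

lemma sum_diag_ind: "finite A \<Longrightarrow> (\<Sum>l\<in>A. (if (c1,c2) = (l,l) then 1 else 0)) = (if c1 = c2 \<and> c1 \<in> A then 1 else (0::'a::comm_ring_1))"
  by (cases "c1 = c2") (auto simp: sum.delta' intro: sum.neutral)

lemma sum_diag_ind2: "finite A \<Longrightarrow> (\<Sum>l\<in>A. (if c1 = l \<and> c2 = l then 1 else 0)) = (if c1 = c2 \<and> c1 \<in> A then 1 else (0::'a::comm_ring_1))"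
  by (cases "c1 = c2") (auto simp: sum.delta intro: sum.neutral)

context qc begin
abbreviation "P \<equiv> B \<times> B"

lemma psi_zero: "b' \<in> P \<Longrightarrow> c \<notin> P \<Longrightarrow> psi_img q qi b' c = 0"
  by (cases b', cases c) (auto simp: psi_img_def basis_def)

lemma psi_off: "c1 \<noteq> c2 \<Longrightarrow> psi_img q qi b (c1,c2) = (if b = (c2,c1) then 1 else 0)"
  by (cases b) (auto simp: psi_img_def)
lemma psi_diag: "1 \<le> a \<Longrightarrow> psi_img q qi b (a,a) = (if b = (a,a) then qi else 0) + (if fst b = snd b \<and> a < fst b then qi - q else 0)"
  by (cases b) (auto simp: psi_img_def)
lemma psi_coloff: "c1 \<noteq> c2 \<Longrightarrow> psi_img q qi (c2,c1) = (\<lambda>c. if c = (c1,c2) then 1 else 0)"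
  by (auto simp: psi_img_def)
lemma psi_coldiag: "psi_img q qi (a,a) c = (if c = (a,a) then qi else if fst c = snd c \<and> 1 \<le> fst c \<and> fst c < a then qi - q else 0)"
  by (cases c) (auto simp: psi_img_def)

lemma psi_kernel:
  assumes z: "z \<in> carrier P" and k: "lin_ext P (psi_img q qi) z = (\<lambda>c. 0)"
  shows "z = (\<lambda>b. 0)"
proof -
  have off: "z (c2,c1) = 0" if "c1 \<in> B" "c2 \<in> B" "c1 \<noteq> c2" for c1 c2
  proof -
    have "0 = lin_ext P (psi_img q qi) z (c1,c2)" using k by simp
    also have "\<dots> = (\<Sum>b\<in>P. z b * (if b = (c2,c1) then 1 else 0))"
      unfolding lin_ext_def using that by (simp add: psi_off)
    also have "\<dots> = z (c2,c1)" using that by (simp add: if_distrib[of "\<lambda>t. _ * t"] sum.delta cong: if_cong)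
    finally show ?thesis by simp
  qed
  have diag: "a \<in> B \<Longrightarrow> z (a,a) = 0" for a
  proof (induction "n - a" arbitrary: a rule: less_induct)
    case less
    have a1: "1 \<le> a" "a \<le> n" using less.prems by (auto simp: basis_def)
    have "0 = lin_ext P (psi_img q qi) z (a,a)" using k by simp
    also have "\<dots> = (\<Sum>b\<in>P. z b * (if b = (a,a) then qi else 0)) + (\<Sum>b\<in>P. z b * (if fst b = snd b \<and> a < fst b then qi - q else 0))"
      unfolding lin_ext_def using a1 by (simp add: psi_diag distrib_left sum.distrib)
    also have "(\<Sum>b\<in>P. z b * (if fst b = snd b \<and> a < fst b then qi - q else 0)) = 0"
    proof (rule sum.neutral, clarify)
      fix x y assume xy: "x \<in> B" "y \<in> B"
      show "z (x,y) * (if fst (x,y) = snd (x,y) \<and> a < fst (x,y) then qi - q else 0) = 0"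
      proof (cases "x = y \<and> a < x")
        case True
        then have "n - x < n - a" using xy by (auto simp: basis_def)
        then have "z (x,x) = 0" using less.hyps xy by blast
        then show ?thesis using True by simp
      qed auto
    qed
    also have "(\<Sum>b\<in>P. z b * (if b = (a,a) then qi else 0)) = z (a,a) * qi"
      using less.prems by (simp add: if_distrib[of "\<lambda>t. _ * t"] sum.delta cong: if_cong)
    finally have "z (a,a) * qi = 0" by simp
    then have "q * (z (a,a) * qi) = 0" by simp
    then have "q * (qi * z (a,a)) = 0" by (simp add: mult.commute)
    then show ?case by (simp add: mult.assoc[symmetric] qqi)
  qed
  show ?thesis
  proof
    fix b show "z b = 0"
    proof (cases "b \<in> P")
      case True
      then obtain x y where b: "b = (x,y)" "x \<in> B" "y \<in> B" by auto
      then show ?thesis using diag off[of y x] by (cases "x = y") auto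
    next
      case False then show ?thesis using z by (cases b) (auto simp: carrier_def)
    qed
  qed
qed

lemma psi_bij: "bij_betw (lin_ext P (psi_img q qi)) (carrier P) (carrier P)"
proof (rule bij_betw_imageI)
  show "inj_on (lin_ext P (psi_img q qi)) (carrier P)"
  proof (rule inj_onI)
    fix x y assume xy: "x \<in> carrier P" "y \<in> carrier P" "lin_ext P (psi_img q qi) x = lin_ext P (psi_img q qi) y"
    have "(\<lambda>b. x b - y b) \<in> carrier P" using xy by (simp add: carrier_def)
    moreover have "lin_ext P (psi_img q qi) (\<lambda>b. x b - y b) = (\<lambda>c. 0)" using xy by (simp add: lin_ext_diff)
    ultimately have "(\<lambda>b. x b - y b) = (\<lambda>b. 0)" by (rule psi_kernel)
    then show "x = y" by (intro ext) (metis eq_iff_diff_eq_0)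
  qed
  show "lin_ext P (psi_img q qi) ` carrier P = carrier P"
  proof
    show "lin_ext P (psi_img q qi) ` carrier P \<subseteq> carrier P"
      using lin_ext_carrier[of P "psi_img q qi"] psi_zero by blast
    have units: "(\<lambda>c. if c = b then 1 else 0) \<in> lin_ext P (psi_img q qi) ` carrier P" if bP: "b \<in> P" for b
    proof -
      obtain x y where b: "b = (x,y)" "x \<in> B" "y \<in> B" using bP by force
      show ?thesis
      proof (cases "x = y")
        case False
        then show ?thesis using S_col[of P "(y,x)" "psi_img q qi"] b psi_coloff[of x y] by simp
      next
        case True
        have "a \<in> B \<Longrightarrow> (\<lambda>c. if c = (a,a) then 1 else 0) \<in> lin_ext P (psi_img q qi) ` carrier P" for a
        proof (induction a rule: less_induct)
          case (less a)
          have sub: "(\<lambda>c. \<Sum>l\<in>{1..<a}. (if c = (l,l) then 1 else 0)) \<in> lin_ext P (psi_img q qi) ` carrier P"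
            by (rule S_sum) (use less in \<open>auto simp: basis_def\<close>)
          have col: "psi_img q qi (a,a) \<in> lin_ext P (psi_img q qi) ` carrier P"
            using less.prems by (intro S_col) auto
          have "(\<lambda>c. q * psi_img q qi (a,a) c + (- (q * (qi - q))) * (\<Sum>l\<in>{1..<a}. (if c = (l,l) then 1 else 0))) \<in> lin_ext P (psi_img q qi) ` carrier P"
            by (intro S_add S_scale col sub)
          moreover have "(\<lambda>c. q * psi_img q qi (a,a) c + (- (q * (qi - q))) * (\<Sum>l\<in>{1..<a}. (if c = (l,l) then 1 else 0))) = (\<lambda>c. if c = (a,a) then 1 else 0)"
          proof
            fix c show "q * psi_img q qi (a,a) c + (- (q * (qi - q))) * (\<Sum>l\<in>{1..<a}. (if c = (l,l) then 1 else 0)) = (if c = (a,a) then 1 else 0)"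
              using qqi by (cases c) (auto simp: psi_coldiag sum_diag_ind sum_diag_ind2 algebra_simps)
          qed
          ultimately show ?case by simp
        qed
        then show ?thesis using b True by simp
      qed
    qed
    show "carrier P \<subseteq> lin_ext P (psi_img q qi) ` carrier P"
      using surj_gen[where img="psi_img q qi" and P=P] units by auto
  qed
qed

end



context qc begin

definition "W i = qp q qi (int n + 1 - 2 * int i)"

lemma W_Suc: "W (Suc j) = qi * qi * W j"
proof -
  have "int n + 1 - 2 * int (Suc j) = (int n + 1 - 2 * int j) + (-2)" by simp
  then have "W (Suc j) = qp q qi (int n + 1 - 2 * int j) * qp q qi (-2)"
    unfolding W_def by (simp only: qp_add[OF qqi])
  moreover have "qp q qi (-2) = qi * qi" by (simp add: qp_def power2_eq_square)
  ultimately show ?thesis by (simp add: W_def mult.commute)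
qed

lemma cases_l: obtains "l = 0" | "l = Suc 0" | "l = 2" | "2 < l" by linarith

lemma chk_psi_all:
  assumes g: "valid_gen n g" and bP: "bb \<in> P" and cP: "cc \<in> P"
  shows "(\<Sum>b'\<in>P. psi_img q qi b' cc * TA g b' bb) = (\<Sum>c'\<in>P. TB g cc c' * psi_img q qi bb c')"
proof -
  obtain a b c1 c2 where e: "bb = (a,b)" "cc = (c1,c2)" and m: "a \<in> B" "b \<in> B" "c1 \<in> B" "c2 \<in> B"
    using bP cP by auto
  show ?thesis
  proof (cases g)
    case (Kh h) then show ?thesis using chk_psi_Kh m e by simp
  next
    case (E i l)
    then have i: "1 \<le> i" "i < n" using g by (auto simp: valid_gen_def)
    show ?thesis
    proof (rule cases_l[of l])
      assume "l = 0" then show ?thesis using chk_psi_E0[OF m i] E e by simp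
    next
      assume "l = Suc 0" then show ?thesis using chk_psi_E1[OF m i] E e by simp
    next
      assume "l = 2" then show ?thesis using chk_psi_E2[OF m i] E e by simp
    next
      assume l: "2 < l" then show ?thesis using chk_psi_Eb[OF m i l] E e by simp
    qed
  next
    case (F i l)
    then have i: "1 \<le> i" "i < n" using g by (auto simp: valid_gen_def)
    show ?thesis
    proof (rule cases_l[of l])
      assume "l = 0" then show ?thesis using chk_psi_F0[OF m i] F e by simp
    next
      assume "l = Suc 0" then show ?thesis using chk_psi_F1[OF m i] F e by simp
    next
      assume "l = 2" then show ?thesis using chk_psi_F2[OF m i] F e by simp
    next
      assume l: "2 < l" then show ?thesis using chk_psi_Fb[OF m i l] F e by simp
    qed
  qed
qed

lemma chk_psip_all:
  assumes g: "valid_gen n g" and bP: "bb \<in> P" and cP: "cc \<in> P"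
  shows "(\<Sum>b'\<in>P. (W (fst b') * psi_img q qi b' cc) * TAp g b' bb) = (\<Sum>c'\<in>P. TB g cc c' * (W (fst bb) * psi_img q qi bb c'))"
proof -
  obtain a b c1 c2 where e: "bb = (a,b)" "cc = (c1,c2)" and m: "a \<in> B" "b \<in> B" "c1 \<in> B" "c2 \<in> B"
    using bP cP by auto
  note ws = W_Suc
  show ?thesis
  proof (cases g)
    case (Kh h) then show ?thesis using chk_psip_Kh[where W=W, OF m W_Suc] m e by simp
  next
    case (E i l)
    then have i: "1 \<le> i" "i < n" using g by (auto simp: valid_gen_def)
    show ?thesis
    proof (rule cases_l[of l])
      assume "l = 0" then show ?thesis using chk_psip_E0[where W=W, OF m i W_Suc] E e by simp
    next
      assume "l = Suc 0" then show ?thesis using chk_psip_E1[where W=W, OF m i W_Suc] E e by simp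
    next
      assume "l = 2" then show ?thesis using chk_psip_E2[where W=W, OF m i W_Suc] E e by simp
    next
      assume l: "2 < l" then show ?thesis using chk_psip_Eb[where W=W, OF m i l W_Suc] E e by simp
    qed
  next
    case (F i l)
    then have i: "1 \<le> i" "i < n" using g by (auto simp: valid_gen_def)
    show ?thesis
    proof (rule cases_l[of l])
      assume "l = 0" then show ?thesis using chk_psip_F0[where W=W, OF m i W_Suc] F e by simp
    next
      assume "l = Suc 0" then show ?thesis using chk_psip_F1[where W=W, OF m i W_Suc] F e by simp
    next
      assume "l = 2" then show ?thesis using chk_psip_F2[where W=W, OF m i W_Suc] F e by simp
    next
      assume l: "2 < l" then show ?thesis using chk_psip_Fb[where W=W, OF m i l W_Suc] F e by simp
    qed
  qed
qed

lemma psi'_W: "psi'_img q qi n b c = W (fst b) * psi_img q qi b c"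
  by (cases b, cases c) (simp add: psi'_img_def psi_img_def W_def)

lemma psip_zero: "b' \<in> P \<Longrightarrow> c \<notin> P \<Longrightarrow> W (fst b') * psi_img q qi b' c = 0"
  using psi_zero by simp

lemma psip_comp: "lin_ext P (psi'_img q qi n) = lin_ext P (psi_img q qi) \<circ> (\<lambda>x b. W (fst b) * x b)"
  by (intro ext) (simp add: lin_ext_def psi'_W mult_ac)

definition "Wi i = qp q qi (- (int n + 1 - 2 * int i))"
lemma WiW[simp]: "Wi i * W i = 1" unfolding W_def Wi_def by (rule qp_neg1)
lemma WWi[simp]: "W i * Wi i = 1" unfolding W_def Wi_def by (rule qp_neg2)

lemma scale_bij: "bij_betw (\<lambda>x b. W (fst b) * x b) (carrier P) (carrier P)"
proof (rule bij_betw_byWitness[where f'="\<lambda>x b. Wi (fst b) * x b"])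
  show "\<forall>a\<in>carrier P. (\<lambda>b. Wi (fst b) * (W (fst b) * a b)) = a"
    by (auto simp: mult.assoc[symmetric])
  show "\<forall>a'\<in>carrier P. (\<lambda>b. W (fst b) * (Wi (fst b) * a' b)) = a'"
    by (auto simp: mult.assoc[symmetric])
qed (auto simp: carrier_def)

lemma main:
  "is_U_iso n P TAp P TB (lin_ext P (psi'_img q qi n)) \<and> is_U_iso n P TA P TB (lin_ext P (psi_img q qi))"
proof
  show "is_U_iso n P TA P TB (lin_ext P (psi_img q qi))"
    unfolding is_U_iso_def
  proof (intro conjI allI impI)
    fix g and x :: "nat \<times> nat \<Rightarrow> 'a" assume g: "valid_gen n g" and x: "x \<in> carrier P"
    have ch: "\<And>b c. b \<in> P \<Longrightarrow> c \<in> P \<Longrightarrow> (\<Sum>b'\<in>P. psi_img q qi b' c * TA g b' b) = (\<Sum>c'\<in>P. TB g c c' * psi_img q qi b c')"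
      using chk_psi_all[OF g] by blast
    show "lin_ext P (psi_img q qi) (act P (TA g) x) = act P (TB g) (lin_ext P (psi_img q qi) x)"
      by (rule intertw[OF _ psi_zero ch x]) simp_all
  qed (rule psi_bij)
  show "is_U_iso n P TAp P TB (lin_ext P (psi'_img q qi n))"
    unfolding is_U_iso_def
  proof (intro conjI allI impI)
    fix g and x :: "nat \<times> nat \<Rightarrow> 'a" assume g: "valid_gen n g" and x: "x \<in> carrier P"
    have ch: "\<And>b c. b \<in> P \<Longrightarrow> c \<in> P \<Longrightarrow> (\<Sum>b'\<in>P. (W (fst b') * psi_img q qi b' c) * TAp g b' b) = (\<Sum>c'\<in>P. TB g c c' * (W (fst b) * psi_img q qi b c'))"
      using chk_psip_all[OF g] by blast
    have  "lin_ext P (psi'_img q qi n) = lin_ext P (\<lambda>b c. W (fst b) * psi_img q qi b c)"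
      by (intro ext) (simp add: lin_ext_def psi'_W)
    then show "lin_ext P (psi'_img q qi n) (act P (TAp g) x) = act P (TB g) (lin_ext P (psi'_img q qi n) x)"
      using intertw[OF _ psip_zero ch x] by simp
  next
    show "bij_betw (lin_ext P (psi'_img q qi n)) (carrier P) (carrier P)"
      unfolding psip_comp by (rule bij_betw_trans[OF scale_bij psi_bij])
  qed
qed

end

theorem lemma5p1:
  fixes q qi :: "'a::comm_ring_1" and n :: nat
  assumes "q * qi = 1" and "1 \<le> n"
  shows "is_U_iso n (basis n \<times> basis n)
           (tensor_rep q qi (basis n) (basis n) (dualp_rep q qi (basis n) (vec_rep q qi)) (vec_rep q qi))
           (basis n \<times> basis n)
           (tensor_rep q qi (basis n) (basis n) (vec_rep q qi) (dual_rep q qi (basis n) (vec_rep q qi)))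
           (lin_ext (basis n \<times> basis n) (psi'_img q qi n))
       \<and> is_U_iso n (basis n \<times> basis n)
           (tensor_rep q qi (basis n) (basis n) (dual_rep q qi (basis n) (vec_rep q qi)) (vec_rep q qi))
           (basis n \<times> basis n)
           (tensor_rep q qi (basis n) (basis n) (vec_rep q qi) (dual_rep q qi (basis n) (vec_rep q qi)))
           (lin_ext (basis n \<times> basis n) (psi_img q qi))"
proof -
  interpret qc q qi n using assms by unfold_locales
  show ?thesis by (rule main)
qed


end
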